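(* Let $m\ge2$, $f_1,\dots,f_m:X\to\mathbb R_{+\infty}$, $x\in\bigcap_{i=1}^m\operatorname{dom} f_i$, and suppose the zero function $0$ belongs to $\mathcal L$. The following are equivalent: (i) $0\in\bigcap_{\varepsilon>0}\sum_{i=1}^m\partial_\varepsilon f_i(x)$; (ii) $\left(\sum_{i=1}^m f_i\right)^*(0)=(f_1^*\square\cdots\square f_m^* )(0)<+\infty$, and $x$ minimizes $\sum_{i=1}^m f_i$ over $X$.
   Context: $X$ is a nonempty set; $\mathbb R_{+\infty}=\mathbb R\cup\{+\infty\}$. A space of abstract linear functions is a family $\mathcal L$ of functions $l:X\to\mathbb R$ such that (a) $l_1,l_2\in\mathcal L$ implies $l_1+l_2\in\mathcal L$, and (b) for every $l\in\mathcal L$ and $m\in\mathbb N$ there exist $l_1,\dots,l_m\in\mathcal L$ with $l=l_1+\dots+l_m$. For $f:X\to\mathbb R_{+\infty}$: $\operatorname{dom} f=\{x:f(x)<+\infty\}$; $f^*(l)=\sup_{x\in X}(l(x)-f(x))$. Infimal convolution: $(g_1\square\cdots\square g_m)(l)=\inf\{\sum_i g_i(l_i):l_i\in\mathcal L,\ \sum_i l_i=l\}$. For $\varepsilon\ge0$ and $x\in\operatorname{dom} f$, $\partial_\varepsilon f(x)=\{l\in\mathcal L: f(y)-f(x)-(l(y)-l(x))+\varepsilon\ge0\ \forall y\in X\}$. Sums of subsets of $\mathcal L$ are Minkowski sums. *)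

theory Defs
  imports "HOL-Library.Extended_Real"
begin

text \<open>Functions X -> R u {+oo} are modelled as 'a => ereal that never take the value -oo.\<close>

definition abstract_linear_space :: "('a \<Rightarrow> real) set \<Rightarrow> bool" where
  "abstract_linear_space L \<longleftrightarrow>
     (\<forall>l1\<in>L. \<forall>l2\<in>L. (\<lambda>y. l1 y + l2 y) \<in> L) \<and>
     (\<forall>l\<in>L. \<forall>k::nat. k \<ge> 1 \<longrightarrow>
        (\<exists>ls. (\<forall>j<k. ls j \<in> L) \<and> l = (\<lambda>y. \<Sum>j<k. ls j y)))"

definition edom :: "('a \<Rightarrow> ereal) \<Rightarrow> 'a set" where
  "edom f = {x. f x < \<infinity>}"

definition conj :: "('a \<Rightarrow> ereal) \<Rightarrow> ('a \<Rightarrow> real) \<Rightarrow> ereal" where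
  "conj f l = (SUP x. ereal (l x) - f x)"

definition infconv :: "('a \<Rightarrow> real) set \<Rightarrow> nat \<Rightarrow> (nat \<Rightarrow> ('a \<Rightarrow> real) \<Rightarrow> ereal)
                        \<Rightarrow> ('a \<Rightarrow> real) \<Rightarrow> ereal" where
  "infconv L m g l = Inf {(\<Sum>i<m. g i (ls i)) | ls.
       (\<forall>i<m. ls i \<in> L) \<and> (\<lambda>y. \<Sum>i<m. ls i y) = l}"

definition eps_subdiff :: "('a \<Rightarrow> real) set \<Rightarrow> real \<Rightarrow> ('a \<Rightarrow> ereal) \<Rightarrow> 'a \<Rightarrow> ('a \<Rightarrow> real) set" where
  "eps_subdiff L \<epsilon> f x = {l \<in> L. \<forall>y. f y - f x - ereal (l y - l x) + ereal \<epsilon> \<ge> 0}"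

definition msum :: "nat \<Rightarrow> (nat \<Rightarrow> ('a \<Rightarrow> real) set) \<Rightarrow> ('a \<Rightarrow> real) set" where
  "msum m S = {(\<lambda>y. \<Sum>i<m. ls i y) | ls. \<forall>i<m. ls i \<in> S i}"

end

theory Submission
  imports Defs
begin

lemma conj_lower: "ereal (l y) - f y \<le> conj f l"
  unfolding conj_def by (rule SUP_upper) simp

lemma fin_rep:
  fixes f :: "nat \<Rightarrow> 'a \<Rightarrow> ereal"
  assumes "\<And>i. i < m \<Longrightarrow> f i y \<noteq> -\<infinity>" "(\<Sum>i<m. f i y) \<noteq> \<infinity>"
  shows "\<And>i. i < m \<Longrightarrow> f i y = ereal (real_of_ereal (f i y))"
    and "(\<Sum>i<m. f i y) = ereal (\<Sum>i<m. real_of_ereal (f i y))"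
proof -
  have fin: "\<And>i. i < m \<Longrightarrow> f i y \<noteq> \<infinity>" using assms(2) sum_Pinfty[of "\<lambda>i. f i y" "{..<m}"] by auto
  show 1: "\<And>i. i < m \<Longrightarrow> f i y = ereal (real_of_ereal (f i y))"
    using fin assms(1) by (metis real_of_ereal.simps(1) ereal_cases)
  have "(\<Sum>i<m. f i y) = (\<Sum>i<m. ereal (real_of_ereal (f i y)))"
    by (rule sum.cong) (use 1 in auto)
  then show "(\<Sum>i<m. f i y) = ereal (\<Sum>i<m. real_of_ereal (f i y))" by simp
qed

theorem mainTheorem6:
  fixes L :: "('a \<Rightarrow> real) set" and m :: nat and f :: "nat \<Rightarrow> 'a \<Rightarrow> ereal" and x :: 'a
  assumes "abstract_linear_space L"
    and "m \<ge> 2"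
    and "\<And>i y. i < m \<Longrightarrow> f i y \<noteq> -\<infinity>"
    and "\<And>i. i < m \<Longrightarrow> x \<in> edom (f i)"
    and "(\<lambda>y. 0) \<in> L"
  shows "(\<forall>\<epsilon>>0. (\<lambda>y. 0) \<in> msum m (\<lambda>i. eps_subdiff L \<epsilon> (f i) x))
     \<longleftrightarrow> (conj (\<lambda>y. \<Sum>i<m. f i y) (\<lambda>y. 0) = infconv L m (\<lambda>i. conj (f i)) (\<lambda>y. 0)
          \<and> conj (\<lambda>y. \<Sum>i<m. f i y) (\<lambda>y. 0) < \<infinity>
          \<and> (\<forall>y. (\<Sum>i<m. f i x) \<le> (\<Sum>i<m. f i y)))"
proof -
  define F where "F = (\<lambda>y. \<Sum>i<m. f i y)"
  define r where "r = (\<lambda>i. real_of_ereal (f i x))"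
  have mpos: "m > 0" using assms(2) by simp
  have rx: "\<And>i. i < m \<Longrightarrow> f i x = ereal (r i)"
    proof -
    fix i assume i: "i < m"
    have "f i x < \<infinity>" "f i x \<noteq> -\<infinity>" using assms(3,4)[OF i] unfolding edom_def by auto
    then show "f i x = ereal (r i)" unfolding r_def by (cases "f i x") auto
  qed
  have Fx: "F x = ereal (\<Sum>i<m. r i)"
  proof -
    have "F x = (\<Sum>i<m. ereal (r i))" unfolding F_def by (rule sum.cong) (use rx in auto)
    then show ?thesis by simp
  qed
  have minconj: "conj F (\<lambda>y. 0) = - F x" if min: "\<forall>y. F x \<le> F y"
  proof (rule antisym)
    show "conj F (\<lambda>y. 0) \<le> - F x" unfolding conj_def
    proof (rule SUP_least)
      fix y assume "y \<in> (UNIV::'a set)"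
      have "F x \<le> F y" using min by blast
      then show "ereal 0 - F y \<le> - F x" using Fx by (cases "F y") auto
    qed
    show "- F x \<le> conj F (\<lambda>y. 0)" using conj_lower[of "\<lambda>y. 0" x F] Fx by simp
  qed
  have FY: "- F x \<le> (\<Sum>i<m. conj (f i) (ls i))" if ls: "(\<lambda>y. \<Sum>i<m. ls i y) = (\<lambda>y. 0)" for ls
  proof -
    have "(\<Sum>i<m. ereal (ls i x - r i)) \<le> (\<Sum>i<m. conj (f i) (ls i))"
    proof (rule sum_mono)
      fix i assume "i \<in> {..<m}"
      then show "ereal (ls i x - r i) \<le> conj (f i) (ls i)"
        using conj_lower[of "ls i" x "f i"] rx[of i] by simp
    qed
    moreover have "(\<Sum>i<m. ls i x) = 0" using fun_cong[OF ls, of x] by simp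
    ultimately show ?thesis using Fx by (simp add: sum_subtractf)
  qed
  show ?thesis
  proof
    assume A: "\<forall>\<epsilon>>0. (\<lambda>y. 0) \<in> msum m (\<lambda>i. eps_subdiff L \<epsilon> (f i) x)"
    have getls: "\<exists>ls. (\<forall>i<m. ls i \<in> eps_subdiff L e (f i) x) \<and> (\<lambda>y. \<Sum>i<m. ls i y) = (\<lambda>y. 0)"
      if "e > 0" for e
      using A that unfolding msum_def by force
    have min: "\<forall>y. F x \<le> F y"
    proof
      fix y
      show "F x \<le> F y"
      proof (cases "F y = \<infinity>")
        case True then show ?thesis by simp
      next
        case False
        define s where "s = (\<lambda>i. real_of_ereal (f i y))"
        have sy: "\<And>i. i < m \<Longrightarrow> f i y = ereal (s i)" and Fy: "F y = ereal (\<Sum>i<m. s i)"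
          using fin_rep[of m f y] assms(3) False unfolding F_def s_def by auto
        have "(\<Sum>i<m. r i) \<le> (\<Sum>i<m. s i)"
        proof (rule field_le_epsilon)
          fix e :: real assume "0 < e"
          then have "e / m > 0" using mpos by simp
          then obtain ls where ls: "\<forall>i<m. ls i \<in> eps_subdiff L (e/m) (f i) x"
            and s0: "(\<lambda>y. \<Sum>i<m. ls i y) = (\<lambda>y. 0)" using getls by blast
          have ineq: "r i \<le> s i - (ls i y - ls i x) + e/m" if "i < m" for i
          proof -
            have "f i y - f i x - ereal (ls i y - ls i x) + ereal (e/m) \<ge> 0"
              using ls that unfolding eps_subdiff_def by blast
            then show ?thesis using sy[OF that] rx[OF that] by simp
          qed
          have "(\<Sum>i<m. r i) \<le> (\<Sum>i<m. s i - (ls i y - ls i x) + e/m)"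
            by (rule sum_mono) (use ineq in auto)
          also have "\<dots> = (\<Sum>i<m. s i) - ((\<Sum>i<m. ls i y) - (\<Sum>i<m. ls i x)) + e"
            using mpos by (simp add: sum.distrib sum_subtractf)
          also have "\<dots> = (\<Sum>i<m. s i) + e"
            using fun_cong[OF s0, of x] fun_cong[OF s0, of y] by simp
          finally show "(\<Sum>i<m. r i) \<le> (\<Sum>i<m. s i) + e" .
        qed
        then show ?thesis using Fx Fy by simp
      qed
    qed
    have c: "conj F (\<lambda>y. 0) = - F x" using minconj min by blast
    have le1: "conj F (\<lambda>y. 0) \<le> infconv L m (\<lambda>i. conj (f i)) (\<lambda>y. 0)"
      unfolding infconv_def c by (rule Inf_greatest) (use FY in blast)
    have le2: "infconv L m (\<lambda>i. conj (f i)) (\<lambda>y. 0) \<le> - F x"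
    proof (rule ereal_le_epsilon2)
      fix e :: real assume "0 < e"
      then have "e / m > 0" using mpos by simp
      then obtain ls where ls: "\<forall>i<m. ls i \<in> eps_subdiff L (e/m) (f i) x"
        and s0: "(\<lambda>y. \<Sum>i<m. ls i y) = (\<lambda>y. 0)" using getls by blast
      have cb: "conj (f i) (ls i) \<le> ereal (ls i x - r i + e/m)" if i: "i < m" for i
        unfolding conj_def
      proof (rule SUP_least)
        fix y assume "y \<in> (UNIV::'a set)"
        show "ereal (ls i y) - f i y \<le> ereal (ls i x - r i + e / m)"
        proof (cases "f i y")
          case (real s)
          have "f i y - f i x - ereal (ls i y - ls i x) + ereal (e/m) \<ge> 0"
            using ls i unfolding eps_subdiff_def by blast
          then show ?thesis using real rx[OF i] by simp
        next
          case PInf then show ?thesis by simp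
        next
          case MInf then show ?thesis using assms(3) i by simp
        qed
      qed
      have "infconv L m (\<lambda>i. conj (f i)) (\<lambda>y. 0) \<le> (\<Sum>i<m. conj (f i) (ls i))"
        unfolding infconv_def
        by (rule Inf_lower) (use ls s0 in \<open>auto simp: eps_subdiff_def\<close>)
      also have "\<dots> \<le> (\<Sum>i<m. ereal (ls i x - r i + e/m))"
        by (rule sum_mono) (use cb in auto)
      also have "\<dots> = ereal ((\<Sum>i<m. ls i x) - (\<Sum>i<m. r i) + e)"
        using mpos by (simp add: sum.distrib sum_subtractf)
      also have "\<dots> = - F x + ereal e"
        using fun_cong[OF s0, of x] Fx by simp
      finally show "infconv L m (\<lambda>i. conj (f i)) (\<lambda>y. 0) \<le> - F x + ereal e" .
    qed
    show "conj (\<lambda>y. \<Sum>i<m. f i y) (\<lambda>y. 0) = infconv L m (\<lambda>i. conj (f i)) (\<lambda>y. 0)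
          \<and> conj (\<lambda>y. \<Sum>i<m. f i y) (\<lambda>y. 0) < \<infinity>
          \<and> (\<forall>y. (\<Sum>i<m. f i x) \<le> (\<Sum>i<m. f i y))"
    proof (intro conjI)
      show "\<forall>y. (\<Sum>i<m. f i x) \<le> (\<Sum>i<m. f i y)" using min unfolding F_def by blast
    qed (use le1 le2 c Fx in \<open>auto simp: F_def[symmetric]\<close>)
  next
    assume B: "conj (\<lambda>y. \<Sum>i<m. f i y) (\<lambda>y. 0) = infconv L m (\<lambda>i. conj (f i)) (\<lambda>y. 0)
          \<and> conj (\<lambda>y. \<Sum>i<m. f i y) (\<lambda>y. 0) < \<infinity>
          \<and> (\<forall>y. (\<Sum>i<m. f i x) \<le> (\<Sum>i<m. f i y))"
    then have min: "\<forall>y. F x \<le> F y" and eq: "conj F (\<lambda>y. 0) = infconv L m (\<lambda>i. conj (f i)) (\<lambda>y. 0)"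
      unfolding F_def by auto
    have ic: "infconv L m (\<lambda>i. conj (f i)) (\<lambda>y. 0) = ereal (- (\<Sum>i<m. r i))"
      using minconj[OF min] eq Fx by simp
    show "\<forall>\<epsilon>>0. (\<lambda>y. 0) \<in> msum m (\<lambda>i. eps_subdiff L \<epsilon> (f i) x)"
    proof (intro allI impI)
      fix e :: real assume e: "e > 0"
      have "infconv L m (\<lambda>i. conj (f i)) (\<lambda>y. 0) < ereal (- (\<Sum>i<m. r i) + e)"
        using ic e by simp
      then obtain ls where lsL: "\<forall>i<m. ls i \<in> L" and s0: "(\<lambda>y. \<Sum>i<m. ls i y) = (\<lambda>y. 0)"
        and lt: "(\<Sum>i<m. conj (f i) (ls i)) < ereal (- (\<Sum>i<m. r i) + e)"
        unfolding infconv_def Inf_less_iff by blast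
      have lo: "ereal (ls i x - r i) \<le> conj (f i) (ls i)" if "i < m" for i
        using conj_lower[of "ls i" x "f i"] rx[OF that] by simp
      have nm: "conj (f i) (ls i) \<noteq> -\<infinity>" if "i < m" for i using lo[OF that] by auto
      have np: "conj (f i) (ls i) \<noteq> \<infinity>" if "i < m" for i
        using lt sum_Pinfty[of "\<lambda>i. conj (f i) (ls i)" "{..<m}"] that by auto
      define c where "c = (\<lambda>i. real_of_ereal (conj (f i) (ls i)))"
      have cc: "conj (f i) (ls i) = ereal (c i)" if "i < m" for i
        using nm[OF that] np[OF that] unfolding c_def by (cases "conj (f i) (ls i)") auto
      have "(\<Sum>i<m. conj (f i) (ls i)) = (\<Sum>i<m. ereal (c i))" by (rule sum.cong) (use cc in auto)
      then have lt2: "(\<Sum>i<m. c i) < - (\<Sum>i<m. r i) + e" using lt by simp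
      have lo2: "ls i x - r i \<le> c i" if "i < m" for i using lo[OF that] cc[OF that] by simp
      have sx: "(\<Sum>i<m. ls i x) = 0" using fun_cong[OF s0, of x] by simp
      have dsum: "(\<Sum>i<m. c i - (ls i x - r i)) < e"
        using lt2 sx by (simp add: sum_subtractf)
      have cj: "c j < ls j x - r j + e" if j: "j < m" for j
      proof -
        have "c j - (ls j x - r j) \<le> (\<Sum>i<m. c i - (ls i x - r i))"
          by (rule member_le_sum) (use lo2 j in auto)
        then show ?thesis using dsum by simp
      qed
      have mem: "ls j \<in> eps_subdiff L e (f j) x" if j: "j < m" for j
        unfolding eps_subdiff_def
      proof (intro CollectI conjI allI)
        show "ls j \<in> L" using lsL j by blast
        fix y
        show "0 \<le> f j y - f j x - ereal (ls j y - ls j x) + ereal e"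
        proof (cases "f j y")
          case (real s)
          have "ereal (ls j y) - f j y \<le> conj (f j) (ls j)" by (rule conj_lower)
          then have "ls j y - s \<le> c j" using real cc[OF j] by simp
          then show ?thesis using real rx[OF j] cj[OF j] by simp
        next
          case PInf then show ?thesis using rx[OF j] by simp
        next
          case MInf then show ?thesis using assms(3) j by simp
        qed
      qed
      show "(\<lambda>y. 0) \<in> msum m (\<lambda>i. eps_subdiff L e (f i) x)"
        unfolding msum_def
      proof (rule CollectI, rule exI[of _ ls], intro conjI allI impI)
        show "(\<lambda>y. 0::real) = (\<lambda>y. \<Sum>i<m. ls i y)" using s0 by simp
      qed (use mem in blast)
    qed
  qed
qed

end
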